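(* Let $G$ be an ordered group and let $S$ be a finite nonempty subset of $G$. If $|S^2| \leq 3|S|-3$, then the subgroup of $G$ generated by $S$ is abelian.
   Context: An ordered group is a group $G$ (written multiplicatively) equipped with a total order $<$ that is invariant under both left and right multiplication: $a<b$ implies $ca<cb$ and $ac<bc$ for all $a,b,c\in G$. For a subset $S\subseteq G$, $S^2=\{ab : a,b\in S\}$. *)

theory Defs
  imports "HOL-Algebra.Algebra"
begin

definition ordered_group :: "('a, 'b) monoid_scheme \<Rightarrow> ('a \<Rightarrow> 'a \<Rightarrow> bool) \<Rightarrow> bool" where
  "ordered_group G lt \<longleftrightarrow>
     group G \<and>
     (\<forall>a\<in>carrier G. \<not> lt a a) \<and>
     (\<forall>a\<in>carrier G. \<forall>b\<in>carrier G. \<forall>c\<in>carrier G. lt a b \<longrightarrow> lt b c \<longrightarrow> lt a c) \<and>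
     (\<forall>a\<in>carrier G. \<forall>b\<in>carrier G. lt a b \<or> a = b \<or> lt b a) \<and>
     (\<forall>a\<in>carrier G. \<forall>b\<in>carrier G. \<forall>c\<in>carrier G.
        lt a b \<longrightarrow> lt (c \<otimes>\<^bsub>G\<^esub> a) (c \<otimes>\<^bsub>G\<^esub> b) \<and> lt (a \<otimes>\<^bsub>G\<^esub> c) (b \<otimes>\<^bsub>G\<^esub> c))"

end

theory Submission
  imports Defs
begin


lemma (in group) comm_gen1:
  assumes x: "x \<in> carrier G" and S: "S \<subseteq> carrier G" and c: "\<forall>s\<in>S. x \<otimes> s = s \<otimes> x"
    and h: "h \<in> generate G S"
  shows "x \<otimes> h = h \<otimes> x"
  using h
proof (induct h rule: generate.induct)
  case one then show ?case using x by simp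
next
  case (incl h) then show ?case using c by blast
next
  case (inv h)
  have hc: "h \<in> carrier G" using inv S by blast
  have e: "x \<otimes> h = h \<otimes> x" using c inv by blast
  have "inv h \<otimes> (x \<otimes> h) \<otimes> inv h = inv h \<otimes> (h \<otimes> x) \<otimes> inv h" using e by simp
  then have "inv h \<otimes> x \<otimes> h = x" using hc x by (simp add: m_assoc[symmetric])
  then have "inv h \<otimes> x \<otimes> h \<otimes> inv h = x \<otimes> inv h" by simp
  then show ?case using hc x by (simp add: m_assoc)
next
  case (eng h1 h2)
  have c1: "h1 \<in> carrier G" "h2 \<in> carrier G" using eng generate_in_carrier S by auto
  have "x \<otimes> (h1 \<otimes> h2) = (x \<otimes> h1) \<otimes> h2" using c1 x by (simp add: m_assoc)
  also have "\<dots> = h1 \<otimes> (x \<otimes> h2)" using c1 x eng by (simp add: m_assoc)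
  also have "\<dots> = (h1 \<otimes> h2) \<otimes> x" using c1 x eng by (simp add: m_assoc)
  finally show ?case .
qed

lemma (in group) comm_gen:
  assumes S: "S \<subseteq> carrier G" and c: "\<forall>s\<in>S. \<forall>t\<in>S. s \<otimes> t = t \<otimes> s"
  shows "comm_group (G\<lparr>carrier := generate G S\<rparr>)"
proof -
  have eq: "G\<lparr>carrier := generate G S\<rparr> = subgroup_generated G S"
    unfolding subgroup_generated_def using S by (simp add: Int_absorb1)
  show ?thesis unfolding eq
  proof (rule group.group_comm_groupI)
    show "group (subgroup_generated G S)" by simp
  next
    fix x y assume xy: "x \<in> carrier (subgroup_generated G S)" "y \<in> carrier (subgroup_generated G S)"
    then have xg: "x \<in> generate G S" "y \<in> generate G S"
      using S by (auto simp: carrier_subgroup_generated Int_absorb1)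
    have xc: "x \<in> carrier G" using xg S generate_in_carrier by blast
    have "\<forall>s\<in>S. x \<otimes> s = s \<otimes> x"
    proof
      fix s assume s: "s \<in> S"
      have "s \<otimes> x = x \<otimes> s" using comm_gen1[of s S x] s S c xg by blast
      then show "x \<otimes> s = s \<otimes> x" by simp
    qed
    then have "x \<otimes> y = y \<otimes> x" using comm_gen1[OF xc S _ xg(2)] by blast
    then show "x \<otimes>\<^bsub>subgroup_generated G S\<^esub> y = y \<otimes>\<^bsub>subgroup_generated G S\<^esub> x" by simp
  qed
qed


locale og = group G for G (structure) + fixes lt :: "'a \<Rightarrow> 'a \<Rightarrow> bool"
  assumes irr: "a \<in> carrier G \<Longrightarrow> \<not> lt a a"
  and trans: "\<lbrakk>a \<in> carrier G; b \<in> carrier G; c \<in> carrier G; lt a b; lt b c\<rbrakk> \<Longrightarrow> lt a c"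
  and total: "\<lbrakk>a \<in> carrier G; b \<in> carrier G\<rbrakk> \<Longrightarrow> lt a b \<or> a = b \<or> lt b a"
  and ml: "\<lbrakk>a \<in> carrier G; b \<in> carrier G; c \<in> carrier G; lt a b\<rbrakk> \<Longrightarrow> lt (c \<otimes> a) (c \<otimes> b)"
  and mr: "\<lbrakk>a \<in> carrier G; b \<in> carrier G; c \<in> carrier G; lt a b\<rbrakk> \<Longrightarrow> lt (a \<otimes> c) (b \<otimes> c)"
begin

lemma asym: "\<lbrakk>a \<in> carrier G; b \<in> carrier G; lt a b\<rbrakk> \<Longrightarrow> \<not> lt b a"
  using trans irr by blast

lemma lm1: "\<lbrakk>a \<in> carrier G; b \<in> carrier G; c \<in> carrier G; d \<in> carrier G; lt a b \<or> a = b; lt c d\<rbrakk>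
   \<Longrightarrow> lt (a \<otimes> c) (b \<otimes> d)"
proof -
  assume h: "a \<in> carrier G" "b \<in> carrier G" "c \<in> carrier G" "d \<in> carrier G" "lt a b \<or> a = b" "lt c d"
  have 1: "lt (a \<otimes> c) (a \<otimes> d)" using ml h by blast
  show ?thesis
  proof (cases "a = b")
    case True then show ?thesis using 1 by simp
  next
    case False
    then have "lt (a \<otimes> d) (b \<otimes> d)" using mr h by blast
    then show ?thesis using 1 trans[of "a \<otimes> c" "a \<otimes> d" "b \<otimes> d"] h by simp
  qed
qed

lemma lm2: "\<lbrakk>a \<in> carrier G; b \<in> carrier G; c \<in> carrier G; d \<in> carrier G; lt a b; lt c d \<or> c = d\<rbrakk>
   \<Longrightarrow> lt (a \<otimes> c) (b \<otimes> d)"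
proof -
  assume h: "a \<in> carrier G" "b \<in> carrier G" "c \<in> carrier G" "d \<in> carrier G" "lt a b" "lt c d \<or> c = d"
  have 1: "lt (a \<otimes> c) (b \<otimes> c)" using mr h by blast
  show ?thesis
  proof (cases "c = d")
    case True then show ?thesis using 1 by simp
  next
    case False
    then have "lt (b \<otimes> c) (b \<otimes> d)" using ml h by blast
    then show ?thesis using 1 trans[of "a \<otimes> c" "b \<otimes> c" "b \<otimes> d"] h by simp
  qed
qed

lemma max_ex: "\<lbrakk>finite Y; Y \<noteq> {}; Y \<subseteq> carrier G\<rbrakk> \<Longrightarrow> \<exists>m\<in>Y. \<forall>x\<in>Y. x \<noteq> m \<longrightarrow> lt x m"
proof (induct Y rule: finite_ne_induct)
  case (singleton x) then show ?case by auto
next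
  case (insert x F)
  then obtain m where m: "m \<in> F" "\<forall>y\<in>F. y \<noteq> m \<longrightarrow> lt y m" by auto
  have xc: "x \<in> carrier G" and Fc: "F \<subseteq> carrier G" using insert by auto
  have mc: "m \<in> carrier G" using m Fc by auto
  show ?case
  proof (cases "lt m x")
    case True
    show ?thesis
    proof (rule bexI[of _ x])
      show "\<forall>y\<in>insert x F. y \<noteq> x \<longrightarrow> lt y x"
      proof (intro ballI impI)
        fix y assume y: "y \<in> insert x F" "y \<noteq> x"
        then have yF: "y \<in> F" by simp
        then have yc: "y \<in> carrier G" using Fc by auto
        show "lt y x"
        proof (cases "y = m")
          case True then show ?thesis using \<open>lt m x\<close> by simp
        next
          case False then have "lt y m" using m yF by auto
          then show ?thesis using trans[OF yc mc xc] \<open>lt m x\<close> by blast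
        qed
      qed
    qed simp
  next
    case False
    then have "x = m \<or> lt x m" using total[OF xc mc] by auto
    then show ?thesis using m by auto
  qed
qed

lemma sm_iff: "x \<in> A <#> B \<longleftrightarrow> (\<exists>a\<in>A. \<exists>b\<in>B. x = a \<otimes> b)"
  by (auto simp: set_mult_def)

lemma sm_finite: "finite A \<Longrightarrow> finite B \<Longrightarrow> finite (A <#> B)"
  by (simp add: set_mult_def)

lemma sm_mono: "A \<subseteq> A' \<Longrightarrow> B \<subseteq> B' \<Longrightarrow> A <#> B \<subseteq> A' <#> B'"
  by (auto simp: set_mult_def)

lemma card_help: "\<lbrakk>finite A; B \<subseteq> A; E \<subseteq> A; B \<inter> E = {}\<rbrakk> \<Longrightarrow> card B + card E \<le> card A"
proof -
  assume h: "finite A" "B \<subseteq> A" "E \<subseteq> A" "B \<inter> E = {}"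
  have "card (B \<union> E) = card B + card E" using h by (meson card_Un_disjoint rev_finite_subset)
  moreover have "card (B \<union> E) \<le> card A" using h by (simp add: card_mono)
  ultimately show ?thesis by simp
qed

lemma comm3: "\<lbrakk>a \<in> carrier G; b \<in> carrier G; c \<in> carrier G; a \<otimes> c = c \<otimes> a; b \<otimes> c = c \<otimes> b\<rbrakk>
  \<Longrightarrow> (a \<otimes> b) \<otimes> c = c \<otimes> (a \<otimes> b)"
proof -
  assume h: "a \<in> carrier G" "b \<in> carrier G" "c \<in> carrier G" "a \<otimes> c = c \<otimes> a" "b \<otimes> c = c \<otimes> b"
  have "(a \<otimes> b) \<otimes> c = a \<otimes> (c \<otimes> b)" using h by (simp add: m_assoc)
  also have "\<dots> = (c \<otimes> a) \<otimes> b" using h by (simp add: m_assoc[symmetric])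
  also have "\<dots> = c \<otimes> (a \<otimes> b)" using h by (simp add: m_assoc)
  finally show ?thesis .
qed

end

context og begin

lemma below:
  assumes T: "T \<subseteq> carrier G" and b: "b \<in> carrier G" and c: "c \<in> T" "\<forall>x\<in>T. x \<noteq> c \<longrightarrow> lt x c"
    and tb: "\<forall>x\<in>T. lt x b" and x: "x \<in> T <#> T"
  shows "lt x (c \<otimes> b) \<and> lt x (b \<otimes> c) \<and> lt x (b \<otimes> b)"
proof -
  obtain y z where yz: "y \<in> T" "z \<in> T" "x = y \<otimes> z" using x by (auto simp: sm_iff)
  have cc: "c \<in> carrier G" "y \<in> carrier G" "z \<in> carrier G" using T c yz by auto
  have 1: "lt y c \<or> y = c" "lt z c \<or> z = c" using c yz by auto
  have 2: "lt y b" "lt z b" using tb yz by auto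
  show ?thesis using lm1[OF cc(2) cc(1) cc(3) b 1(1) 2(2)] lm2[OF cc(2) b cc(3) cc(1) 2(1) 1(2)]
      lm2[OF cc(2) b cc(3) b 2(1)] 2(2) yz(3) by auto
qed

lemma chain: "finite R \<Longrightarrow> R \<noteq> {} \<Longrightarrow> R \<subseteq> carrier G \<Longrightarrow> 2 * card R - 1 \<le> card (R <#> R)"
proof (induct "card R" arbitrary: R rule: less_induct)
  case less
  obtain b where b: "b \<in> R" "\<forall>x\<in>R. x \<noteq> b \<longrightarrow> lt x b" using max_ex[OF less(2) less(3) less(4)] by blast
  have bc: "b \<in> carrier G" using b less(4) by auto
  show ?case
  proof (cases "R = {b}")
    case True
    then have "R <#> R = {b \<otimes> b}" by (auto simp: set_mult_def)
    then show ?thesis using True by simp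
  next
    case False
    define T where "T = R - {b}"
    have T1: "T \<noteq> {}" using False less(3) b(1) unfolding T_def by blast
    have T2: "finite T" "T \<subseteq> carrier G" "T \<subseteq> R" using less(2,4) unfolding T_def by auto
    have T3: "card T < card R" unfolding T_def using card_Diff1_less[OF less(2) b(1)] .
    note T = T1 T2(1,2) T3 T2(3)
    have cT: "card T = card R - 1" using b less(2) by (simp add: T_def)
    have IH: "2 * card T - 1 \<le> card (T <#> T)" using less(1)[OF T(4) T(2) T(1) T(3)] .
    obtain c where c: "c \<in> T" "\<forall>x\<in>T. x \<noteq> c \<longrightarrow> lt x c" using max_ex[OF T(2) T(1) T(3)] by blast
    have tb: "\<forall>x\<in>T. lt x b" using b by (auto simp: T_def)
    have cc: "c \<in> carrier G" using c(1) T(3) by blast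
    have cb: "lt c b" using tb c by auto
    have cbbb: "lt (c \<otimes> b) (b \<otimes> b)" using mr[OF cc bc bc cb] .
    have neq: "c \<otimes> b \<noteq> b \<otimes> b" using cbbb irr bc by auto
    have cR: "c \<in> R" using c(1) T(5) by blast
    have E: "{c \<otimes> b, b \<otimes> b} \<subseteq> R <#> R" proof -
      have "c \<otimes> b \<in> R <#> R" using b(1) cR unfolding sm_iff by blast
      moreover have "b \<otimes> b \<in> R <#> R" using b(1) unfolding sm_iff by blast
      ultimately show ?thesis by simp
    qed
    have D0: "\<forall>x\<in>T <#> T. x \<noteq> c \<otimes> b \<and> x \<noteq> b \<otimes> b"
    proof
      fix x assume x: "x \<in> T <#> T"
      have "lt x (c \<otimes> b)" "lt x (b \<otimes> b)" using below[OF T(3) bc c tb x] by auto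
      moreover have "x \<in> carrier G" using x T(3) unfolding sm_iff by (metis m_closed subsetD)
      ultimately show "x \<noteq> c \<otimes> b \<and> x \<noteq> b \<otimes> b" using irr by auto
    qed
    have D: "(T <#> T) \<inter> {c \<otimes> b, b \<otimes> b} = {}" using D0 by blast
    have "card (T <#> T) + card {c \<otimes> b, b \<otimes> b} \<le> card (R <#> R)"
      using card_help[OF sm_finite[OF less(2) less(2)] sm_mono[OF T(5) T(5)] E D] .
    then have "card (T <#> T) + 2 \<le> card (R <#> R)" using neq by simp
    moreover have "card T \<ge> 1" using T by (simp add: Suc_leI card_gt_0_iff)
    ultimately show ?thesis using IH cT by linarith
  qed
qed

end

context og begin

lemma memS: "x \<in> S \<Longrightarrow> y \<in> S \<Longrightarrow> x \<otimes> y \<in> S <#> S"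
  unfolding sm_iff by blast

lemma smE: "x \<in> T <#> T \<Longrightarrow> (\<And>y z. y \<in> T \<Longrightarrow> z \<in> T \<Longrightarrow> x = y \<otimes> z \<Longrightarrow> P) \<Longrightarrow> P"
  unfolding sm_iff by blast

lemma stepA:
  assumes S: "finite S" "S \<subseteq> carrier G" and b: "b \<in> S" "\<forall>x\<in>S. x \<noteq> b \<longrightarrow> lt x b"
    and Tdef: "T = S - {b}" and Tne: "T \<noteq> {}"
    and Tab: "\<forall>x\<in>T. \<forall>y\<in>T. x \<otimes> y = y \<otimes> x" and nc: "\<exists>t\<in>T. t \<otimes> b \<noteq> b \<otimes> t"
  shows "card (T <#> T) + card T + 2 \<le> card (S <#> S)"
proof -
  have bc: "b \<in> carrier G" using b S by blast
  have Tf: "finite T" "T \<subseteq> carrier G" "T \<subseteq> S" "b \<notin> T" using S Tdef by auto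
  have tb: "\<forall>x\<in>T. lt x b" using b Tdef by auto
  define D where "D = {t\<in>T. t \<otimes> b \<noteq> b \<otimes> t}"
  have Df: "finite D" "D \<noteq> {}" "D \<subseteq> carrier G" using Tf nc unfolding D_def by auto
  obtain v where v: "v \<in> D" "\<forall>x\<in>D. x \<noteq> v \<longrightarrow> lt x v" using max_ex[OF Df] by blast
  have vT: "v \<in> T" and vnc: "v \<otimes> b \<noteq> b \<otimes> v" using v(1) unfolding D_def by auto
  have vc: "v \<in> carrier G" using vT Tf by blast
  have vmax: "\<And>t. t \<in> T \<Longrightarrow> t \<otimes> b \<noteq> b \<otimes> t \<Longrightarrow> t = v \<or> lt t v"
    using v unfolding D_def by auto
  have bbig: "\<And>x. x \<in> T <#> T \<Longrightarrow> lt x (b \<otimes> b)"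
  proof -
    fix x assume "x \<in> T <#> T"
    then obtain y z where yz: "y \<in> T" "z \<in> T" "x = y \<otimes> z" by (rule smE)
    have "y \<in> carrier G" "z \<in> carrier G" using yz Tf by auto
    then show "lt x (b \<otimes> b)" using lm2[of y b z b] tb yz bc by auto
  qed
  have claim: "v \<otimes> b \<notin> (\<lambda>t. b \<otimes> t) ` T \<or> b \<otimes> v \<notin> (\<lambda>t. t \<otimes> b) ` T"
  proof (rule ccontr)
    assume "\<not> ?thesis"
    then obtain t t' where t: "t \<in> T" "v \<otimes> b = b \<otimes> t" and t': "t' \<in> T" "b \<otimes> v = t' \<otimes> b" by auto
    have tc: "t \<in> carrier G" "t' \<in> carrier G" using t t' Tf by auto
    have "t \<otimes> b \<noteq> b \<otimes> t"
    proof
      assume e: "t \<otimes> b = b \<otimes> t"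
      have "(v \<otimes> b) \<otimes> b = b \<otimes> (t \<otimes> b)" using t tc bc by (simp add: m_assoc)
      also have "\<dots> = (b \<otimes> v) \<otimes> b" using e t tc bc vc by (simp add: m_assoc)
      finally have "v \<otimes> b = b \<otimes> v" using bc vc by simp
      then show False using vnc by simp
    qed
    moreover have "t \<noteq> v" using t vnc by auto
    ultimately have "lt t v" using vmax t by blast
    then have l1: "lt (v \<otimes> b) (b \<otimes> v)" using ml[OF tc(1) vc bc] t by simp
    have "t' \<otimes> b \<noteq> b \<otimes> t'"
    proof
      assume e: "t' \<otimes> b = b \<otimes> t'"
      then have "b \<otimes> v = b \<otimes> t'" using t' by simp
      then have "v = t'" using bc vc tc by simp
      then show False using vnc t' e by simp
    qed
    moreover have "t' \<noteq> v" using t' vnc by auto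
    ultimately have "lt t' v" using vmax t' by blast
    then have l2: "lt (b \<otimes> v) (v \<otimes> b)" using mr[OF tc(2) vc bc] t' by simp
    show False using l1 l2 asym bc vc by blast
  qed
  have comm_yz: "\<And>x. x \<in> T <#> T \<Longrightarrow> x \<otimes> v = v \<otimes> x \<and> x \<in> carrier G"
  proof -
    fix x assume "x \<in> T <#> T"
    then obtain y z where yz: "y \<in> T" "z \<in> T" "x = y \<otimes> z" by (rule smE)
    have c: "y \<in> carrier G" "z \<in> carrier G" using yz Tf by auto
    have "y \<otimes> v = v \<otimes> y" "z \<otimes> v = v \<otimes> z" using Tab yz vT by auto
    then show "x \<otimes> v = v \<otimes> x \<and> x \<in> carrier G" using comm3[OF c vc] yz c by auto
  qed
  have n1: "v \<otimes> b \<notin> T <#> T"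
  proof
    assume "v \<otimes> b \<in> T <#> T"
    then have "(v \<otimes> b) \<otimes> v = v \<otimes> (v \<otimes> b)" using comm_yz by auto
    then have "v \<otimes> (b \<otimes> v) = v \<otimes> (v \<otimes> b)" using vc bc by (simp add: m_assoc)
    then show False using vc bc vnc by simp
  qed
  have n2: "b \<otimes> v \<notin> T <#> T"
  proof
    assume "b \<otimes> v \<in> T <#> T"
    then have "(b \<otimes> v) \<otimes> v = v \<otimes> (b \<otimes> v)" using comm_yz by auto
    then have "(b \<otimes> v) \<otimes> v = (v \<otimes> b) \<otimes> v" using vc bc by (simp add: m_assoc)
    then show False using vc bc vnc by simp
  qed
  have n3: "\<And>t. t \<in> T \<Longrightarrow> b \<otimes> t \<notin> T <#> T"
  proof
    fix t assume t: "t \<in> T" "b \<otimes> t \<in> T <#> T"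
    have tc: "t \<in> carrier G" using t Tf by auto
    have tv: "t \<otimes> v = v \<otimes> t" using Tab t vT by auto
    have "(b \<otimes> t) \<otimes> v = v \<otimes> (b \<otimes> t)" using comm_yz t by auto
    moreover have "(b \<otimes> t) \<otimes> v = (b \<otimes> v) \<otimes> t" using tv tc vc bc by (simp add: m_assoc)
    moreover have "v \<otimes> (b \<otimes> t) = (v \<otimes> b) \<otimes> t" using tc vc bc by (simp add: m_assoc)
    ultimately have "(b \<otimes> v) \<otimes> t = (v \<otimes> b) \<otimes> t" by simp
    then show False using vc bc tc vnc by simp
  qed
  have n4: "\<And>t. t \<in> T \<Longrightarrow> t \<otimes> b \<notin> T <#> T"
  proof
    fix t assume t: "t \<in> T" "t \<otimes> b \<in> T <#> T"
    have tc: "t \<in> carrier G" using t Tf by auto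
    have tv: "t \<otimes> v = v \<otimes> t" using Tab t vT by auto
    have "(t \<otimes> b) \<otimes> v = v \<otimes> (t \<otimes> b)" using comm_yz t by auto
    moreover have "v \<otimes> (t \<otimes> b) = t \<otimes> (v \<otimes> b)" using tv tc vc bc by (simp add: m_assoc[symmetric])
    moreover have "(t \<otimes> b) \<otimes> v = t \<otimes> (b \<otimes> v)" using tc vc bc by (simp add: m_assoc)
    ultimately have "t \<otimes> (b \<otimes> v) = t \<otimes> (v \<otimes> b)" by simp
    then show False using vc bc tc vnc by simp
  qed
  have n5: "b \<otimes> b \<notin> T <#> T" using bbig irr bc by blast
  have bv_ne: "b \<otimes> b \<noteq> v \<otimes> b" "b \<otimes> b \<noteq> b \<otimes> v" using vT Tf(4) bc vc by auto
  have finS: "finite (S <#> S)" using sm_finite S by blast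
  have sub: "T <#> T \<subseteq> S <#> S" using sm_mono Tf by blast
  show ?thesis
  proof (cases "v \<otimes> b \<notin> (\<lambda>t. b \<otimes> t) ` T")
    case True
    define E where "E = insert (b \<otimes> b) (insert (v \<otimes> b) ((\<lambda>t. b \<otimes> t) ` T))"
    have inj: "inj_on (\<lambda>t. b \<otimes> t) T" using Tf(2) bc by (intro inj_onI) (metis l_cancel subsetD)
    have bbn: "b \<otimes> b \<notin> (\<lambda>t. b \<otimes> t) ` T" using Tf bc by auto
    have cE: "card E = card T + 2"
      unfolding E_def using True bbn bv_ne Tf(1) card_image[OF inj] by simp
    have ES: "E \<subseteq> S <#> S" unfolding E_def using memS b(1) vT Tf(3) by blast
    have ED: "(T <#> T) \<inter> E = {}" unfolding E_def using n1 n3 n5 by blast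
    show ?thesis using card_help[OF finS sub ES ED] cE by simp
  next
    case False
    then have F: "b \<otimes> v \<notin> (\<lambda>t. t \<otimes> b) ` T" using claim by blast
    define E where "E = insert (b \<otimes> b) (insert (b \<otimes> v) ((\<lambda>t. t \<otimes> b) ` T))"
    have inj: "inj_on (\<lambda>t. t \<otimes> b) T" using Tf(2) bc by (intro inj_onI) (metis r_cancel subsetD)
    have bbn: "b \<otimes> b \<notin> (\<lambda>t. t \<otimes> b) ` T" using Tf bc by auto
    have cE: "card E = card T + 2"
      unfolding E_def using F bbn bv_ne Tf(1) card_image[OF inj] by simp
    have ES: "E \<subseteq> S <#> S" unfolding E_def using memS b(1) vT Tf(3) by blast
    have ED: "(T <#> T) \<inter> E = {}" unfolding E_def using n2 n4 n5 by blast
    show ?thesis using card_help[OF finS sub ES ED] cE by simp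
  qed
qed


lemma stepB:
  assumes S: "finite S" "S \<subseteq> carrier G" and b: "b \<in> S" "\<forall>x\<in>S. x \<noteq> b \<longrightarrow> lt x b"
    and Tdef: "T = S - {b}" and nab: "\<exists>x\<in>T. \<exists>y\<in>T. x \<otimes> y \<noteq> y \<otimes> x"
  shows "card (T <#> T) + 3 \<le> card (S <#> S)"
proof -
  have bc: "b \<in> carrier G" using b S by blast
  have Tf: "finite T" "T \<subseteq> carrier G" "T \<subseteq> S" "b \<notin> T" using S Tdef by auto
  have Tne: "T \<noteq> {}" using nab by blast
  have tb: "\<forall>x\<in>T. lt x b" using b Tdef by auto
  obtain c where c: "c \<in> T" "\<forall>x\<in>T. x \<noteq> c \<longrightarrow> lt x c" using max_ex[OF Tf(1) Tne Tf(2)] by blast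
  have cc: "c \<in> carrier G" using c(1) Tf(2) by blast
  have cb: "lt c b" using tb c by blast
  have nT: "\<And>x. x \<in> T <#> T \<Longrightarrow> x \<noteq> c \<otimes> b \<and> x \<noteq> b \<otimes> c \<and> x \<noteq> b \<otimes> b"
  proof -
    fix x assume x: "x \<in> T <#> T"
    have "lt x (c \<otimes> b) \<and> lt x (b \<otimes> c) \<and> lt x (b \<otimes> b)" using below[OF Tf(2) bc c tb x] .
    moreover have "x \<in> carrier G" using x Tf(2) unfolding sm_iff by (metis m_closed subsetD)
    ultimately show "x \<noteq> c \<otimes> b \<and> x \<noteq> b \<otimes> c \<and> x \<noteq> b \<otimes> b" using irr by auto
  qed
  have cbne: "c \<otimes> b \<noteq> b \<otimes> b" "b \<otimes> c \<noteq> b \<otimes> b" using cc bc c(1) Tf(4) by auto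
  have finS: "finite (S <#> S)" using sm_finite S by blast
  have sub: "T <#> T \<subseteq> S <#> S" using sm_mono Tf by blast
  have cS: "c \<in> S" using c(1) Tf(3) by blast
  have key: "\<exists>E. E \<subseteq> S <#> S \<and> (T <#> T) \<inter> E = {} \<and> card E = 3"
  proof (cases "\<exists>t\<in>T. t \<otimes> b \<noteq> b \<otimes> t")
    case True
    define D where "D = {t\<in>T. t \<otimes> b \<noteq> b \<otimes> t}"
    have Df: "finite D" "D \<noteq> {}" "D \<subseteq> carrier G" using Tf True unfolding D_def by auto
    obtain v where v: "v \<in> D" "\<forall>x\<in>D. x \<noteq> v \<longrightarrow> lt x v" using max_ex[OF Df] by blast
    have vT: "v \<in> T" and vnc: "v \<otimes> b \<noteq> b \<otimes> v" using v(1) unfolding D_def by auto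
    have vc: "v \<in> carrier G" using vT Tf by blast
    have vmax: "\<And>t. t \<in> T \<Longrightarrow> t \<otimes> b \<noteq> b \<otimes> t \<Longrightarrow> t = v \<or> lt t v"
      using v unfolding D_def by auto
    show ?thesis
    proof (cases "v = c")
      case True
      have E: "{b \<otimes> b, c \<otimes> b, b \<otimes> c} \<subseteq> S <#> S" using memS b(1) cS by blast
      have ED: "(T <#> T) \<inter> {b \<otimes> b, c \<otimes> b, b \<otimes> c} = {}" using nT by blast
      have "card {b \<otimes> b, c \<otimes> b, b \<otimes> c} = 3" using cbne vnc True by auto
      then show ?thesis using E ED by blast
    next
      case False
      have lvc: "lt v c" using c vT False by blast
      have cbc: "c \<otimes> b = b \<otimes> c"
      proof (rule ccontr)
        assume "c \<otimes> b \<noteq> b \<otimes> c"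
        then have "c = v \<or> lt c v" using vmax c(1) by blast
        then show False using False lvc asym cc vc by blast
      qed
      have xx: "v \<otimes> b \<notin> T <#> T \<or> b \<otimes> v \<notin> T <#> T"
      proof (rule ccontr)
        assume "\<not> ?thesis"
        then have h1: "v \<otimes> b \<in> T <#> T" and h2: "b \<otimes> v \<in> T <#> T" by auto
        obtain y z where yz: "y \<in> T" "z \<in> T" "v \<otimes> b = y \<otimes> z" using h1 by (rule smE)
        have yzc: "y \<in> carrier G" "z \<in> carrier G" using yz Tf by auto
        have "lt v y"
        proof (rule ccontr)
          assume "\<not> lt v y"
          then have "lt y v \<or> y = v" using total[OF yzc(1) vc] by auto
          then have "lt (y \<otimes> z) (v \<otimes> b)" using lm1[OF yzc(1) vc yzc(2) bc] tb yz by blast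
          then show False using yz(3) irr[OF m_closed[OF vc bc]] by simp
        qed
        then have yb: "y \<otimes> b = b \<otimes> y" using vmax[OF yz(1)] asym yzc vc by blast
        have zle: "lt z v \<or> z = v"
        proof (rule ccontr)
          assume "\<not> ?thesis"
          then have "lt v z" using total[OF yzc(2) vc] by auto
          then have zb: "z \<otimes> b = b \<otimes> z" using vmax[OF yz(2)] asym yzc vc by blast
          have "(y \<otimes> z) \<otimes> b = b \<otimes> (y \<otimes> z)" using comm3[OF yzc bc yb zb] .
          then have "(v \<otimes> b) \<otimes> b = (b \<otimes> v) \<otimes> b" using yz vc bc by (simp add: m_assoc)
          then show False using vnc vc bc by simp
        qed
        have l1: "lt (v \<otimes> b) (b \<otimes> v)" using lm2[OF yzc(1) bc yzc(2) vc] tb yz zle by simp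
        obtain y' z' where yz': "z' \<in> T" "y' \<in> T" "b \<otimes> v = z' \<otimes> y'" using h2 by (rule smE)
        have yzc': "y' \<in> carrier G" "z' \<in> carrier G" using yz' Tf by auto
        have "lt v y'"
        proof (rule ccontr)
          assume "\<not> lt v y'"
          then have "lt y' v \<or> y' = v" using total[OF yzc'(1) vc] by auto
          then have "lt (z' \<otimes> y') (b \<otimes> v)" using lm2[OF yzc'(2) bc yzc'(1) vc] tb yz' by blast
          then show False using yz'(3) irr[OF m_closed[OF bc vc]] by simp
        qed
        then have yb': "y' \<otimes> b = b \<otimes> y'" using vmax[OF yz'(2)] asym yzc' vc by blast
        have zle': "lt z' v \<or> z' = v"
        proof (rule ccontr)
          assume "\<not> ?thesis"
          then have "lt v z'" using total[OF yzc'(2) vc] by auto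
          then have zb: "z' \<otimes> b = b \<otimes> z'" using vmax[OF yz'(1)] asym yzc' vc by blast
          have "(z' \<otimes> y') \<otimes> b = b \<otimes> (z' \<otimes> y')" using comm3[OF yzc'(2) yzc'(1) bc zb yb'] .
          then have "(b \<otimes> v) \<otimes> b = b \<otimes> (b \<otimes> v)" using yz'(3) by simp
          then have "b \<otimes> (v \<otimes> b) = b \<otimes> (b \<otimes> v)" using vc bc by (simp add: m_assoc)
          then show False using vnc vc bc by simp
        qed
        have l2: "lt (b \<otimes> v) (v \<otimes> b)" using lm1[OF yzc'(2) vc yzc'(1) bc] tb yz' zle' by simp
        show False using l1 l2 asym vc bc by blast
      qed
      then obtain x where x: "x = v \<otimes> b \<or> x = b \<otimes> v" "x \<notin> T <#> T" by blast
      have xne: "x \<noteq> b \<otimes> b" "x \<noteq> c \<otimes> b"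
        using x vc bc cc vT Tf(4) False cbc by auto
      have E: "{b \<otimes> b, c \<otimes> b, x} \<subseteq> S <#> S" using memS b(1) cS vT Tf(3) x(1) by blast
      have ED: "(T <#> T) \<inter> {b \<otimes> b, c \<otimes> b, x} = {}" using nT x(2) by blast
      have "card {b \<otimes> b, c \<otimes> b, x} = 3" using cbne xne by auto
      then show ?thesis using E ED by blast
    qed
  next
    case False
    then have cen: "\<And>t. t \<in> T \<Longrightarrow> t \<otimes> b = b \<otimes> t" by blast
    define N where "N = {t\<in>T. \<exists>s\<in>T. t \<otimes> s \<noteq> s \<otimes> t}"
    have Nf: "finite N" "N \<noteq> {}" "N \<subseteq> carrier G" using Tf nab unfolding N_def by auto
    obtain u where u: "u \<in> N" "\<forall>x\<in>N. x \<noteq> u \<longrightarrow> lt x u" using max_ex[OF Nf] by blast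
    obtain s where s: "s \<in> T" "u \<otimes> s \<noteq> s \<otimes> u" and uT: "u \<in> T" using u(1) unfolding N_def by auto
    define W where "W = {t\<in>T. t \<otimes> u \<noteq> u \<otimes> t}"
    have Wf: "finite W" "W \<noteq> {}" "W \<subseteq> carrier G" using Tf s unfolding W_def by auto
    obtain w where w: "w \<in> W" "\<forall>x\<in>W. x \<noteq> w \<longrightarrow> lt x w" using max_ex[OF Wf] by blast
    have wT: "w \<in> T" and wu: "w \<otimes> u \<noteq> u \<otimes> w" using w(1) unfolding W_def by auto
    have wc: "w \<in> carrier G" "u \<in> carrier G" using wT uT Tf by auto
    have wN: "w \<in> N" using wT uT wu unfolding N_def by blast
    have wneu: "w \<noteq> u" using wu by auto
    have lwu: "lt w u" using u(2) wN wneu by blast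
    have "lt u c \<or> u = c" using c uT by blast
    then have lwc: "lt w c" using lwu trans[OF wc(1) wc(2) cc] by blast
    then have wnec: "w \<noteq> c" using irr cc by blast
    have wmax: "\<And>t. t \<in> T \<Longrightarrow> t \<otimes> u \<noteq> u \<otimes> t \<Longrightarrow> t = w \<or> lt t w"
      using w unfolding W_def by auto
    have nbw: "b \<otimes> w \<notin> T <#> T"
    proof
      assume "b \<otimes> w \<in> T <#> T"
      then obtain y z where yz: "y \<in> T" "z \<in> T" "b \<otimes> w = y \<otimes> z" by (rule smE)
      have yzc: "y \<in> carrier G" "z \<in> carrier G" using yz Tf by auto
      show False
      proof (cases "y \<otimes> u \<noteq> u \<otimes> y")
        case True
        then have "y = w \<or> lt y w" using wmax yz by blast
        then have "lt (y \<otimes> z) (w \<otimes> b)" using lm1[OF yzc(1) wc(1) yzc(2) bc] tb yz by blast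
        then show False using yz(3) cen[OF wT] irr[OF m_closed[OF bc wc(1)]] by simp
      next
        case False
        note yu = this
        show False
        proof (cases "z \<otimes> u \<noteq> u \<otimes> z")
          case True
          then have "z = w \<or> lt z w" using wmax yz by blast
          then have "lt (y \<otimes> z) (b \<otimes> w)" using lm2[OF yzc(1) bc yzc(2) wc(1)] tb yz by blast
          then show False using yz(3) irr[OF m_closed[OF bc wc(1)]] by simp
        next
          case False
          have "(y \<otimes> z) \<otimes> u = u \<otimes> (y \<otimes> z)" using comm3[OF yzc wc(2)] yu False by simp
          then have "(b \<otimes> w) \<otimes> u = u \<otimes> (b \<otimes> w)" using yz by simp
          also have "\<dots> = (u \<otimes> b) \<otimes> w" using wc bc by (simp add: m_assoc)
          also have "\<dots> = b \<otimes> (u \<otimes> w)" using cen[OF uT] wc bc by (simp add: m_assoc)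
          finally have "b \<otimes> (w \<otimes> u) = b \<otimes> (u \<otimes> w)" using wc bc by (simp add: m_assoc)
          then show False using wu wc bc by simp
        qed
      qed
    qed
    have cbc: "c \<otimes> b = b \<otimes> c" using cen c(1) by blast
    have xne: "b \<otimes> w \<noteq> b \<otimes> b" "b \<otimes> w \<noteq> c \<otimes> b"
      using wc bc cc wT Tf(4) wnec cbc by auto
    have bwS: "b \<otimes> w \<in> S <#> S" using memS b(1) wT Tf(3) by blast
    have E: "{b \<otimes> b, c \<otimes> b, b \<otimes> w} \<subseteq> S <#> S" using memS b(1) cS bwS by blast
    have ED: "(T <#> T) \<inter> {b \<otimes> b, c \<otimes> b, b \<otimes> w} = {}" using nT nbw by blast
    have "card {b \<otimes> b, c \<otimes> b, b \<otimes> w} = 3" using cbne xne by auto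
    then show ?thesis using E ED by blast
  qed
  then obtain E where E: "E \<subseteq> S <#> S" "(T <#> T) \<inter> E = {}" "card E = 3" by blast
  show ?thesis using card_help[OF finS sub E(1) E(2)] E(3) by simp
qed


lemma main: "finite S \<Longrightarrow> S \<subseteq> carrier G \<Longrightarrow> (\<exists>x\<in>S. \<exists>y\<in>S. x \<otimes> y \<noteq> y \<otimes> x)
   \<Longrightarrow> 3 * card S - 2 \<le> card (S <#> S)"
proof (induct "card S" arbitrary: S rule: less_induct)
  case less
  obtain x y where xy: "x \<in> S" "y \<in> S" "x \<otimes> y \<noteq> y \<otimes> x" using less(4) by blast
  have Sne: "S \<noteq> {}" using xy by blast
  obtain b where b: "b \<in> S" "\<forall>x\<in>S. x \<noteq> b \<longrightarrow> lt x b" using max_ex[OF less(2) Sne less(3)] by blast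
  define T where "T = S - {b}"
  have cT: "card T = card S - 1" using b(1) less(2) by (simp add: T_def)
  have cTl: "card T < card S" unfolding T_def using card_Diff1_less[OF less(2) b(1)] .
  have Tf: "finite T" "T \<subseteq> carrier G" using less(2,3) unfolding T_def by auto
  have cS1: "card S \<ge> 1" using Sne less(2) by (simp add: Suc_leI card_gt_0_iff)
  show ?case
  proof (cases "\<exists>x\<in>T. \<exists>y\<in>T. x \<otimes> y \<noteq> y \<otimes> x")
    case True
    have IH: "3 * card T - 2 \<le> card (T <#> T)" using less(1)[OF cTl Tf True] .
    have st: "card (T <#> T) + 3 \<le> card (S <#> S)" using stepB[OF less(2) less(3) b T_def True] .
    have "T \<noteq> {}" using True by blast
    then have "card T \<ge> 1" using Tf(1) by (simp add: Suc_leI card_gt_0_iff)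
    then show ?thesis using IH st cT by linarith
  next
    case False
    then have Tab: "\<forall>x\<in>T. \<forall>y\<in>T. x \<otimes> y = y \<otimes> x" by blast
    have xyne: "x \<noteq> y" using xy by blast
    have nc: "\<exists>t\<in>T. t \<otimes> b \<noteq> b \<otimes> t"
    proof (cases "x = b")
      case True
      then have "y \<in> T" using xyne xy unfolding T_def by blast
      then show ?thesis using xy True by metis
    next
      case False
      note xb = this
      show ?thesis
      proof (cases "y = b")
        case True
        then have "x \<in> T" using xb xy unfolding T_def by blast
        then show ?thesis using xy True by metis
      next
        case False
        then have "x \<in> T" "y \<in> T" using xb xy unfolding T_def by auto
        then show ?thesis using Tab xy by blast
      qed
    qed
    have Tne: "T \<noteq> {}" using nc by blast
    have st: "card (T <#> T) + card T + 2 \<le> card (S <#> S)"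
      using stepA[OF less(2) less(3) b T_def Tne Tab nc] .
    have ch: "2 * card T - 1 \<le> card (T <#> T)" using chain[OF Tf(1) Tne Tf(2)] .
    have "card T \<ge> 1" using Tne Tf(1) by (simp add: Suc_leI card_gt_0_iff)
    then show ?thesis using ch st cT by linarith
  qed
qed

end

lemma og_of: "ordered_group G lt \<Longrightarrow> og G lt"
  unfolding ordered_group_def og_def og_axioms_def
  by (intro conjI; elim conjE; blast)

theorem theorem1p3:
  fixes G (structure) and lt :: "'a \<Rightarrow> 'a \<Rightarrow> bool" and S :: "'a set"
  assumes "ordered_group G lt"
    and "S \<subseteq> carrier G" and "finite S" and "S \<noteq> {}"
    and "card (S <#> S) \<le> 3 * card S - 3"
  shows "comm_group (G\<lparr>carrier := generate G S\<rparr>)"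
proof -
  interpret og G lt by (rule og_of[OF assms(1)])
  have "\<forall>x\<in>S. \<forall>y\<in>S. x \<otimes> y = y \<otimes> x"
  proof (rule ccontr)
    assume "\<not> ?thesis"
    then have "3 * card S - 2 \<le> card (S <#> S)" using main[OF assms(3) assms(2)] by blast
    moreover have "card S \<ge> 1" using assms(3,4) by (simp add: Suc_leI card_gt_0_iff)
    ultimately show False using assms(5) by linarith
  qed
  then show ?thesis using comm_gen[OF assms(2)] by blast
qed

end
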